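(* Let $M=p_i^{n_i}p_j^{n_j}p_k^{n_k}$ with distinct primes and $n_i,n_j,n_k\in\mathbb{N}$, let $A\oplus B=\mathbb{Z}_M$ with $\Phi_M(X)\mid A(X)$, assume $A$ is fibered on $D$-grids where $D=M/(p_ip_jp_k)$, and let $\Lambda=\Lambda(z_0,D)$ for some $z_0\in\mathbb{Z}_M$. Let $z_\nu=z_0+\nu M/p_k$ for $\nu=0,\dots,p_k-1$. Assume that $\kappa(a)\in\{i,j\}$ for all $a\in\Sigma_A(\Lambda)$, and that for each $\nu$ there is $\lambda(\nu)\in\{i,j\}$ with $\kappa(a)=\lambda(\nu)$ for all $a\in\Sigma_A(z_\nu*F_i*F_j)$. Assume further that for each $\lambda\in\{i,j\}$, $$\#\{\nu\in\{0,1,\dots,p_k-1\}:\lambda(\nu)=\lambda\}\ge2.$$ Then all fibers $z*F_k$ with $z\in\Lambda$ split with the same parity: either all with parity $(A,B)$ or all with parity $(B,A)$.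
   Context: $A\oplus B=\mathbb{Z}_M$ means every element of $\mathbb{Z}_M$ is uniquely $a+b$, $a\in A$, $b\in B$; $A(X)=\sum_{a\in A}X^a$ ($A$ in $\{0,\dots,M-1\}$), $\Phi_M$ the $M$-th cyclotomic polynomial. For $d\mid M$, $\Lambda(x,d)=\{x'\in\mathbb{Z}_M:d\mid x-x'\}$. For $\nu\in\{i,j,k\}$, $F_\nu=\{0,M/p_\nu,\dots,(p_\nu-1)M/p_\nu\}$; $x*Y=\{x+y:y\in Y\}$, $X*Y=\{x+y:x\in X,y\in Y\}$. A set $Y$ is fibered in the $p_\nu$ direction if it is a union of sets $y*F_\nu$, $y\in Y$. "$A$ is fibered on $D$-grids" means for every $a\in A$, $A\cap\Lambda(a,D)$ is fibered in some direction $p_\nu$. The function $\kappa:A\to\{i,j,k\}$: for each $D$-grid $\Lambda(x,D)$ meeting $A$, fix one direction $\nu(x)$ in which $A\cap\Lambda(x,D)$ is fibered (chosen arbitrarily if several) and set $\kappa(a)=\nu(x)$ for $a\in A\cap\Lambda(x,D)$. For $Z\subset\mathbb{Z}_M$, $\Sigma_A(Z)=\{a\in A:a+b\in Z\text{ for some }b\in B\}$, $\Sigma_B(Z)=\{b\in B:a+b\in Z\text{ for some }a\in A\}$. A fiber $Z=z*F_k$ splits with parity $(A,B)$ if $p_k^{n_k}\mid a-a'$ for all $a,a'\in\Sigma_A(Z)$ and, for distinct $b,b'\in\Sigma_B(Z)$, $p_k^{n_k-1}\mid b-b'$ but $p_k^{n_k}\nmid b-b'$; parity $(B,A)$ is defined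 with $A,B$ interchanged. *)

theory Defs
  imports "HOL-Analysis.Analysis" "HOL-Computational_Algebra.Polynomial"
begin

text \<open>Z_M is modelled by the naturals {0..<M}; all sums are reduced mod M.\<close>

definition tiling :: "nat \<Rightarrow> nat set \<Rightarrow> nat set \<Rightarrow> bool" where
  "tiling M A B \<longleftrightarrow> A \<subseteq> {0..<M} \<and> B \<subseteq> {0..<M} \<and>
     (\<forall>x<M. \<exists>!p. p \<in> A \<times> B \<and> (fst p + snd p) mod M = x)"

definition mask_poly :: "nat set \<Rightarrow> complex poly" where
  "mask_poly A = (\<Sum>a\<in>A. monom 1 a)"

definition cyclotomic :: "nat \<Rightarrow> complex poly" where
  "cyclotomic M = (\<Prod>k\<in>{k. 1 \<le> k \<and> k \<le> M \<and> coprime k M}.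
       [:- cis (2 * pi * real k / real M), 1:])"

definition Lam :: "nat \<Rightarrow> nat \<Rightarrow> nat \<Rightarrow> nat set" where
  "Lam M x d = {x'. x' < M \<and> int d dvd (int x - int x')}"

definition fib :: "nat \<Rightarrow> nat \<Rightarrow> nat set" where
  "fib M p = {t * (M div p) | t. t < p}"

definition tr :: "nat \<Rightarrow> nat \<Rightarrow> nat set \<Rightarrow> nat set" where
  "tr M x Y = {(x + y) mod M | y. y \<in> Y}"

definition sumset :: "nat \<Rightarrow> nat set \<Rightarrow> nat set \<Rightarrow> nat set" where
  "sumset M X Y = {(x + y) mod M | x y. x \<in> X \<and> y \<in> Y}"

definition fibered :: "nat \<Rightarrow> nat set \<Rightarrow> nat \<Rightarrow> bool" where
  "fibered M Y p \<longleftrightarrow> Y = (\<Union>y\<in>Y. tr M y (fib M p))"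

definition Sig :: "nat \<Rightarrow> nat set \<Rightarrow> nat set \<Rightarrow> nat set \<Rightarrow> nat set" where
  "Sig M A B Z = {a \<in> A. \<exists>b\<in>B. (a + b) mod M \<in> Z}"

definition splits :: "nat \<Rightarrow> nat set \<Rightarrow> nat set \<Rightarrow> nat \<Rightarrow> nat \<Rightarrow> nat set \<Rightarrow> bool" where
  "splits M A B p n Z \<longleftrightarrow>
     (\<forall>a\<in>Sig M A B Z. \<forall>a'\<in>Sig M A B Z. int (p ^ n) dvd (int a - int a')) \<and>
     (\<forall>b\<in>Sig M B A Z. \<forall>b'\<in>Sig M B A Z. b \<noteq> b' \<longrightarrow>
        int (p ^ (n - 1)) dvd (int b - int b') \<and> \<not> int (p ^ n) dvd (int b - int b'))"

end

theory Submission
  imports Defs "HOL-Computational_Algebra.Polynomial" "HOL-Computational_Algebra.Primes"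
begin


definition red :: "nat \<Rightarrow> int poly \<Rightarrow> nat \<Rightarrow> int" where
  "red M R x = (\<Sum>k\<le>degree R. if k mod M = x then coeff R k else 0)"

lemma red_bound:
  assumes "degree R \<le> n"
  shows "red M R x = (\<Sum>k\<le>n. if k mod M = x then coeff R k else 0)"
  unfolding red_def
  by (rule sum.mono_neutral_left) (use assms in \<open>auto simp: coeff_eq_0\<close>)

lemma red_add: "red M (R + S) x = red M R x + red M S x"
proof -
  let ?n = "max (degree R) (degree S)"
  have "degree (R + S) \<le> ?n" by (rule degree_add_le) auto
  then have "red M (R + S) x = (\<Sum>k\<le>?n. if k mod M = x then coeff (R + S) k else 0)"
    by (rule red_bound)
  also have "\<dots> = (\<Sum>k\<le>?n. if k mod M = x then coeff R k else 0) + (\<Sum>k\<le>?n. if k mod M = x then coeff S k else 0)"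
    by (simp add: sum.distrib[symmetric] if_distrib cong: if_cong) 
  also have "\<dots> = red M R x + red M S x"
    by (simp add: red_bound[of R ?n] red_bound[of S ?n])
  finally show ?thesis .
qed

lemma red_zero: "red M 0 x = 0"
  unfolding red_def by (simp only: coeff_0 degree_0 if_cancel sum.neutral_const)

lemma red_sum: "red M (\<Sum>i\<in>I. f i) x = (\<Sum>i\<in>I. red M (f i) x)"
  by (induction I rule: infinite_finite_induct) (auto simp: red_zero red_add)

lemma red_smult: "red M (smult c R) x = c * red M R x"
proof -
  have "degree (smult c R) \<le> degree R" by simp
  then have "red M (smult c R) x = (\<Sum>k\<le>degree R. if k mod M = x then coeff (smult c R) k else 0)"
    by (rule red_bound)
  then show ?thesis by (simp add: red_def sum_distrib_left if_distrib cong: if_cong)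
qed

lemma red_monom: "red M (monom c k) x = (if k mod M = x then c else 0)"
proof -
  have "red M (monom c k) x = (\<Sum>i\<le>k. if i mod M = x then coeff (monom c k) i else 0)"
    by (rule red_bound) (simp add: degree_monom_le)
  also have "\<dots> = (\<Sum>i\<in>{k}. if i mod M = x then coeff (monom c k) i else 0)"
    by (rule sum.mono_neutral_right) auto
  finally show ?thesis by simp
qed

definition PA :: "nat \<Rightarrow> nat set \<Rightarrow> int poly" where
  "PA r A = (\<Sum>a\<in>A. monom 1 (r * a))"

definition QB :: "nat set \<Rightarrow> int poly" where
  "QB B = (\<Sum>b\<in>B. monom 1 b)"

definition cnt :: "nat \<Rightarrow> nat \<Rightarrow> nat set \<Rightarrow> nat set \<Rightarrow> nat \<Rightarrow> nat" where
  "cnt M r A B x = card {p \<in> A \<times> B. (r * fst p + snd p) mod M = x}"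

definition U :: "nat \<Rightarrow> nat \<Rightarrow> nat set \<Rightarrow> nat set \<Rightarrow> bool" where
  "U M r A B \<longleftrightarrow> (\<forall>x<M. cnt M r A B x = 1)"

lemma card_as_sum: 
  assumes "finite S"
  shows "int (card {p \<in> S. P p}) = (\<Sum>p\<in>S. if P p then 1 else 0)"
proof -
  have "int (card {p \<in> S. P p}) = (\<Sum>p\<in>{p \<in> S. P p}. 1)" by simp
  also have "\<dots> = (\<Sum>p\<in>S. if P p then 1 else 0)"
    by (rule sum.inter_filter[OF assms])
  finally show ?thesis .
qed

lemma PQ_sum:
  "PA r A * QB B = (\<Sum>p\<in>A \<times> B. monom 1 (r * fst p + snd p))"
proof -
  have "PA r A * QB B = (\<Sum>a\<in>A. \<Sum>b\<in>B. monom 1 (r * a) * monom 1 b)"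
    unfolding PA_def QB_def by (rule sum_product)
  also have "\<dots> = (\<Sum>a\<in>A. \<Sum>b\<in>B. monom 1 (r * a + b))"
    by (simp only: mult_monom mult_1)
  also have "\<dots> = (\<Sum>(a, b)\<in>A \<times> B. monom 1 (r * a + b))"
    by (rule sum.cartesian_product)
  also have "\<dots> = (\<Sum>p\<in>A \<times> B. monom 1 (r * fst p + snd p))"
    by (rule sum.cong) auto
  finally show ?thesis .
qed

lemma red_shift_PQ:
  assumes "finite A" "finite B"
  shows "red M (monom c k * (PA r A * QB B)) x =
         c * int (card {p \<in> A \<times> B. (k + r * fst p + snd p) mod M = x})"
proof -
  have "monom c k * (PA r A * QB B) = (\<Sum>p\<in>A \<times> B. monom c k * monom 1 (r * fst p + snd p))"
    unfolding PQ_sum by (rule sum_distrib_left)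
  also have "\<dots> = (\<Sum>p\<in>A \<times> B. monom c (k + r * fst p + snd p))"
    by (simp only: mult_monom mult_1_right add.assoc)
  finally have e: "monom c k * (PA r A * QB B) = (\<Sum>p\<in>A \<times> B. monom c (k + r * fst p + snd p))" .
  have "red M (monom c k * (PA r A * QB B)) x = (\<Sum>p\<in>A \<times> B. if (k + r * fst p + snd p) mod M = x then c else 0)"
    unfolding e red_sum red_monom ..
  also have "\<dots> = (\<Sum>p\<in>A \<times> B. c * (if (k + r * fst p + snd p) mod M = x then 1 else 0))"
    by (rule sum.cong) auto
  also have "\<dots> = c * (\<Sum>p\<in>A \<times> B. if (k + r * fst p + snd p) mod M = x then 1 else 0)"
    by (rule sum_distrib_left[symmetric])
  also have "\<dots> = c * int (card {p \<in> A \<times> B. (k + r * fst p + snd p) mod M = x})"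
    using assms by (simp only: card_as_sum finite_cartesian_product)
  finally show ?thesis .
qed

lemma red_PQ:
  assumes "finite A" "finite B"
  shows "red M (PA r A * QB B) x = int (cnt M r A B x)"
  using red_shift_PQ[OF assms, where c=1 and k=0 and M=M and r=r and x=x] by (simp add: cnt_def)

lemma mod_shift_iff:
  fixes M k t x :: nat
  assumes "x < M"
  shows "(k + t) mod M = x \<longleftrightarrow> t mod M = (x + (M - k mod M)) mod M"
proof -
  have M: "M > 0" using assms by simp
  have kM: "k mod M < M" using M by simp
  have j: "(k + t) mod M = (k mod M + t) mod M" by (simp add: mod_add_left_eq)
  show ?thesis
  proof
    assume h: "(k + t) mod M = x"
    have "t mod M = (t + M) mod M" by simp
    also have "t + M = k mod M + t + (M - k mod M)" using kM by simp
    also have "(k mod M + t + (M - k mod M)) mod M = ((k mod M + t) mod M + (M - k mod M)) mod M"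
      by (rule mod_add_left_eq[symmetric])
    also have "\<dots> = (x + (M - k mod M)) mod M" using h j by simp
    finally show "t mod M = (x + (M - k mod M)) mod M" .
  next
    assume h: "t mod M = (x + (M - k mod M)) mod M"
    have "(k + t) mod M = (k mod M + t mod M) mod M" by (simp add: mod_add_eq)
    also have "\<dots> = (k mod M + (x + (M - k mod M)) mod M) mod M" using h by simp
    also have "\<dots> = (k mod M + (x + (M - k mod M))) mod M" by (simp add: mod_add_right_eq)
    also have "k mod M + (x + (M - k mod M)) = x + M" using kM by simp
    also have "(x + M) mod M = x" using assms by simp
    finally show "(k + t) mod M = x" .
  qed
qed

lemma red_shift_U:
  assumes "finite A" "finite B" "U M r A B" "x < M"
  shows "red M (monom c k * (PA r A * QB B)) x = c"
proof -
  have M: "M > 0" using assms by simp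
  have S: "{p \<in> A \<times> B. (k + r * fst p + snd p) mod M = x} =
        {p \<in> A \<times> B. (r * fst p + snd p) mod M = (x + (M - k mod M)) mod M}"
    using mod_shift_iff[OF assms(4), of k] by (auto simp: add.assoc)
  have "(x + (M - k mod M)) mod M < M" using M by simp
  then have "cnt M r A B ((x + (M - k mod M)) mod M) = 1"
    using assms(3) unfolding U_def by blast
  then have C: "card {p \<in> A \<times> B. (k + r * fst p + snd p) mod M = x} = 1"
    unfolding S cnt_def .
  show ?thesis
    using red_shift_PQ[OF assms(1,2), where c=c and k=k and M=M and r=r and x=x] unfolding C by simp
qed

lemma red_mult_U:
  assumes "finite A" "finite B" "U M r A B" "x < M"
  shows "red M (R * (PA r A * QB B)) x = poly R 1"
proof -
  have "R * (PA r A * QB B) = (\<Sum>i\<le>degree R. monom (coeff R i) i * (PA r A * QB B))"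
    by (subst poly_as_sum_of_monoms[symmetric, of R]) (simp add: sum_distrib_right)
  then have "red M (R * (PA r A * QB B)) x = (\<Sum>i\<le>degree R. coeff R i)"
    using red_shift_U[OF assms] by (simp add: red_sum)
  also have "\<dots> = poly R 1" by (simp add: poly_altdef)
  finally show ?thesis .
qed

lemma poly_PA_1: "finite A \<Longrightarrow> poly (PA r A) 1 = int (card A)"
  by (simp add: PA_def poly_sum poly_monom)

lemma freshman:
  fixes X Y :: "int poly"
  assumes p: "prime p"
  shows "[:int p:] dvd ((X + Y) ^ p - X ^ p - Y ^ p)"
proof -
  have p1: "p > 1" using p prime_gt_1_nat by blast
  have "(X + Y) ^ p = (\<Sum>k\<le>p. of_nat (p choose k) * X ^ k * Y ^ (p - k))"
    by (rule binomial_ring)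
  also have "\<dots> = (\<Sum>k\<in>{0<..<p}. of_nat (p choose k) * X ^ k * Y ^ (p - k)) + X ^ p + Y ^ p"
  proof -
    have "{..p} = insert 0 (insert p {0<..<p})" using p1 by auto
    then show ?thesis using p1 by (simp add: algebra_simps)
  qed
  finally have eq: "(X + Y) ^ p - X ^ p - Y ^ p = (\<Sum>k\<in>{0<..<p}. of_nat (p choose k) * X ^ k * Y ^ (p - k))"
    by simp
  have "[:int p:] dvd of_nat (p choose k) * X ^ k * Y ^ (p - k)" if "k \<in> {0<..<p}" for k
  proof -
    from that have "p dvd (p choose k)" using dvd_choose_prime[of k p] p by auto
    then obtain m where "p choose k = p * m" by auto
    then have "(of_nat (p choose k) :: int poly) = [:int p:] * of_nat m"
      by (simp add: of_nat_poly)
    then show ?thesis by (metis dvd_triv_left mult.assoc)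
  qed
  then show ?thesis unfolding eq by (intro dvd_sum) auto
qed

lemma frob:
  assumes p: "prime p" and fin: "finite A"
  shows "[:int p:] dvd (PA r A ^ p - PA (p * r) A)"
  using fin
proof (induction A rule: finite_induct)
  case empty
  have "p > 0" using p prime_gt_0_nat by blast
  then show ?case by (simp add: PA_def zero_power)
next
  case (insert a A)
  have e1: "PA r (insert a A) = monom 1 (r * a) + PA r A"
    using insert by (simp add: PA_def)
  have e2: "PA (p * r) (insert a A) = monom 1 (p * r * a) + PA (p * r) A"
    using insert by (simp add: PA_def)
  have "monom (1::int) (r * a) ^ p = monom 1 (p * r * a)"
    by (simp add: monom_power mult.commute mult.left_commute)
  then have "PA r (insert a A) ^ p - PA (p * r) (insert a A) =
     ((monom 1 (r * a) + PA r A) ^ p - monom 1 (r * a) ^ p - PA r A ^ p) + (PA r A ^ p - PA (p * r) A)"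
    unfolding e1 e2 by simp
  then show ?case by (metis dvd_add freshman[OF p] insert.IH)
qed

lemma sum_cnt:
  assumes "finite A" "finite B" "M > 0"
  shows "(\<Sum>x<M. cnt M r A B x) = card A * card B"
proof -
  have "(\<Sum>x<M. cnt M r A B x) = (\<Sum>x\<in>{..<M}. \<Sum>p\<in>{p. p \<in> A \<times> B \<and> (r * fst p + snd p) mod M = x}. 1)"
    by (simp add: cnt_def)
  also have "\<dots> = (\<Sum>p\<in>A \<times> B. 1)"
    by (rule sum.group) (use assms in auto)
  also have "\<dots> = card A * card B" by (simp add: card_cartesian_product)
  finally show ?thesis .
qed

lemma all_one:
  fixes f :: "nat \<Rightarrow> nat"
  assumes "\<forall>x<M. f x \<ge> 1" "(\<Sum>x<M. f x) = M"
  shows "\<forall>x<M. f x = 1"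
proof -
  have "(\<Sum>x<M. f x - 1) = (\<Sum>x<M. f x) - (\<Sum>x<M. (1::nat))"
    using assms(1) by (subst sum_subtractf_nat) auto
  then have "(\<Sum>x<M. f x - 1) = 0" using assms(2) by simp
  then have "\<forall>x<M. f x - 1 = 0" by simp
  then show ?thesis using assms(1) by (meson diff_is_0_eq le_antisym)
qed

lemma U_card:
  assumes "finite A" "finite B" "U M r A B" "M > 0"
  shows "card A * card B = M"
proof -
  have "(\<Sum>x<M. cnt M r A B x) = (\<Sum>x<M. 1)"
    using assms(3) unfolding U_def by (intro sum.cong) auto
  then show ?thesis using sum_cnt[OF assms(1,2,4)] by simp
qed

lemma U_prime_step:
  assumes fin: "finite A" "finite B" and U: "U M r A B" and M: "M > 0"
    and p: "prime p" and pM: "\<not> p dvd M"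
  shows "U M (p * r) A B"
proof -
  have cardM: "card A * card B = M" using U_card[OF fin U M] .
  have pA: "\<not> p dvd card A" using pM cardM by (metis dvd_mult2)
  have "\<not> int p dvd int (card A) ^ (p - 1)"
    using pA p by (metis int_dvd_int_iff of_nat_power prime_dvd_power prime_nat_iff_prime)
  obtain K where K: "PA r A ^ p - PA (p * r) A = [:int p:] * K"
    using frob[OF p fin(1), of r] unfolding dvd_def by blast
  have p0: "p > 0" using p prime_gt_0_nat by blast
  have ge1: "cnt M (p * r) A B x \<ge> 1" if x: "x < M" for x
  proof -
    have "PA r A ^ p = PA r A ^ (p - 1) * PA r A"
      using p0 by (metis Suc_diff_1 power_Suc2)
    then have e: "PA r A ^ p * QB B = PA r A ^ (p - 1) * (PA r A * QB B)" by (simp add: mult.assoc)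
    have R1: "red M (PA r A ^ p * QB B) x = int (card A) ^ (p - 1)"
      unfolding e using red_mult_U[OF fin U x] poly_PA_1[OF fin(1)] by (simp add: poly_power)
    have K': "PA r A ^ p = PA (p * r) A + [:int p:] * K" using K by (simp add: algebra_simps)
    have R2: "PA r A ^ p * QB B = PA (p * r) A * QB B + smult (int p) (K * QB B)"
      by (simp add: K' algebra_simps)
    have eq: "int (card A) ^ (p - 1) = int (cnt M (p * r) A B x) + int p * red M (K * QB B) x"
      using R1 unfolding R2 by (simp add: red_add red_smult red_PQ[OF fin])
    have "cnt M (p * r) A B x \<noteq> 0"
    proof
      assume "cnt M (p * r) A B x = 0"
      then have "int (card A) ^ (p - 1) = int p * red M (K * QB B) x" using eq by simp
      then show False using \<open>\<not> int p dvd int (card A) ^ (p - 1)\<close> by simp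
    qed
    then show ?thesis by simp
  qed
  have "\<forall>x<M. cnt M (p * r) A B x = 1"
  proof (rule all_one)
    show "\<forall>x<M. 1 \<le> cnt M (p * r) A B x" using ge1 by blast
    show "(\<Sum>x<M. cnt M (p * r) A B x) = M" using sum_cnt[OF fin M, of "p * r"] cardM by (rule trans)
  qed
  then show ?thesis unfolding U_def .
qed


lemma U_mod1:
  assumes "M = 1"
  shows "cnt M r A B x = cnt M r' A B x"
  using assms by (simp add: cnt_def)

lemma U_coprime:
  assumes fin: "finite A" "finite B" and U1: "U M 1 A B" and M: "M > 0"
  shows "coprime r M \<Longrightarrow> U M r A B"
proof (induction r rule: less_induct)
  case (less r)
  show ?case
  proof (cases "r \<le> 1")
    case True
    show ?thesis
    proof (cases "r = 0")
      case True
      then have "M = 1" using less.prems by simp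
      then show ?thesis using U1 U_mod1[of M _ A B] unfolding U_def by metis
    next
      case False
      then have "r = 1" using True by simp
      then show ?thesis using U1 by simp
    qed
  next
    case False
    then obtain p where p: "prime p" "p dvd r" using prime_factor_nat[of r] by auto
    then obtain s where s: "r = p * s" by (auto elim: dvdE)
    have p1: "p > 1" using p prime_gt_1_nat by blast
    have s0: "s > 0" using s False by (cases s) auto
    have "s < r" using s p1 s0 by simp
    have cs: "coprime s M" using less.prems s by simp
    have pM: "\<not> p dvd M"
    proof
      assume "p dvd M"
      then have "is_unit p" using coprime_common_divisor[OF less.prems p(2)] by blast
      then show False using p1 by simp
    qed
    show ?thesis unfolding s using U_prime_step[OF fin less.IH[OF \<open>s < r\<close> cs] M p(1) pM] .
  qed
qed

lemma lift_coprime: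
  fixes r0 m M :: nat
  assumes "m > 0" "M > 0" "coprime r0 m"
  shows "\<exists>r. r mod m = r0 mod m \<and> coprime r M"
proof -
  define S where "S = {p. prime p \<and> p dvd M \<and> \<not> p dvd r0}"
  have finS: "finite S" unfolding S_def
    by (rule finite_subset[of _ "{..M}"]) (use assms(2) in \<open>auto dest: dvd_imp_le\<close>)
  define t where "t = \<Prod>S"
  define r where "r = r0 + m * t"
  have "r mod m = r0 mod m" unfolding r_def by simp
  moreover have "coprime r M"
  proof (rule ccontr)
    assume "\<not> coprime r M"
    then obtain c where c: "c dvd r" "c dvd M" "\<not> is_unit c" by (rule not_coprimeE)
    then have "c \<noteq> 1" by auto
    then obtain p where p: "prime p" "p dvd c" using prime_factor_nat by blast
    have pr: "p dvd r" and pM: "p dvd M" using p c dvd_trans by blast+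
    show False
    proof (cases "p dvd r0")
      case True
      have "\<not> p dvd m"
      proof
        assume "p dvd m"
        then have "is_unit p" using coprime_common_divisor[OF assms(3) True] by blast
        then show False using p(1) by simp
      qed
      moreover have "\<not> p dvd t"
      proof
        assume "p dvd t"
        then obtain q where q: "q \<in> S" "p dvd q" using prime_dvd_prod_iff[OF finS p(1)] unfolding t_def by auto
        then have "p = q" using primes_dvd_imp_eq[OF p(1)] unfolding S_def by auto
        then show False using q True unfolding S_def by auto
      qed
      ultimately have "\<not> p dvd m * t" using p(1) by (simp add: prime_dvd_mult_iff)
      moreover have "p dvd m * t" using pr True unfolding r_def by (simp add: dvd_add_right_iff)
      ultimately show False by simp
    next
      case False
      then have "p \<in> S" using p pM unfolding S_def by auto
      then have "p dvd t" unfolding t_def using dvd_prodI[OF finS, of p "\<lambda>x. x"] by simp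
      then have "p dvd m * t" by simp
      then have "p dvd r0" using pr unfolding r_def by (simp add: dvd_add_left_iff)
      then show False using False by simp
    qed
  qed
  ultimately show ?thesis by blast
qed

lemma r_exists:
  fixes \<alpha> \<beta> :: int and M :: nat
  assumes M: "M > 0" and div: "\<forall>d. d dvd int M \<longrightarrow> (d dvd \<alpha> \<longleftrightarrow> d dvd \<beta>)"
  shows "\<exists>r::nat. coprime r M \<and> int M dvd int r * \<alpha> - \<beta>"
proof -
  define g where "g = gcd \<alpha> (int M)"
  have g0: "g > 0" unfolding g_def using M by simp
  have gb: "g dvd \<beta>" using div unfolding g_def by auto
  have gb2: "gcd \<beta> (int M) = g"
  proof (rule zdvd_antisym_nonneg)
    show "gcd \<beta> (int M) dvd g" unfolding g_def using div by simp
    show "g dvd gcd \<beta> (int M)" using gb unfolding g_def by simp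
  qed (use g0 in auto)
  obtain u where u: "\<alpha> = g * u" unfolding g_def by (metis gcd_dvd1 dvdE)
  obtain w where w: "\<beta> = g * w" using gb by (auto elim: dvdE)
  obtain m where m: "int M = g * m" unfolding g_def by (metis gcd_dvd2 dvdE)
  have "g * m > 0" using m M by simp
  then have m0: "m > 0" using g0 by (simp add: zero_less_mult_iff)
  have "g * gcd u m = gcd (g * u) (g * m)" using gcd_mult_distrib_int[of g u m] g0 by simp
  moreover have "gcd (g * u) (g * m) = g"
  proof -
    have "gcd (g * u) (g * m) = gcd \<alpha> (int M)" by (simp only: u m)
    then show ?thesis by (simp only: g_def)
  qed
  ultimately have "g * gcd u m = g" by simp
  then have gu: "gcd u m = 1" using g0 by simp
  have "g * gcd w m = gcd (g * w) (g * m)" using gcd_mult_distrib_int[of g w m] g0 by simp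
  moreover have "gcd (g * w) (g * m) = g"
  proof -
    have "gcd (g * w) (g * m) = gcd \<beta> (int M)" by (simp only: w m)
    then show ?thesis using gb2 by simp
  qed
  ultimately have "g * gcd w m = g" by simp
  then have gw: "gcd w m = 1" using g0 by simp
  obtain s t' where st: "s * u + t' * m = 1" using bezout_int[of u m] gu by auto
  have cs: "coprime s m"
  proof (rule coprimeI)
    fix c assume "c dvd s" "c dvd m"
    then have "c dvd s * u + t' * m" by simp
    then show "is_unit c" using st by simp
  qed
  have cw: "coprime w m" using gw by (simp add: coprime_iff_gcd_eq_1)
  define r0 where "r0 = (s * w) mod m"
  have r0pos: "r0 \<ge> 0" unfolding r0_def using m0 by simp
  have cr0: "coprime r0 m" unfolding r0_def using cs cw m0 by simp
  have "coprime (int (nat r0)) (int (nat m))" using cr0 r0pos m0 by simp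
  then have cr0n: "coprime (nat r0) (nat m)" by (simp only: coprime_int_iff)
  obtain r where r: "r mod nat m = nat r0 mod nat m" "coprime r M"
    using lift_coprime[OF _ M cr0n] m0 by auto
  have "int (r mod nat m) = int (nat r0 mod nat m)" using r(1) by simp
  then have "int r mod int (nat m) = int (nat r0) mod int (nat m)" by (simp only: of_nat_mod)
  then have "int r mod m = r0 mod m" using r0pos m0 by simp
  then have "int r mod m = (s * w) mod m" unfolding r0_def by simp
  then have "m dvd int r - s * w" by (simp only: mod_eq_dvd_iff)
  then have d1: "m dvd (int r - s * w) * u" by simp
  have "s * u = 1 - t' * m" using st by simp
  then have "s * w * u = w - w * t' * m"
  proof -
    assume su: "s * u = 1 - t' * m"
    have "s * w * u = w * (s * u)" by (simp add: ac_simps)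
    also have "\<dots> = w * (1 - t' * m)" using su by simp
    also have "\<dots> = w - w * t' * m" by (simp add: right_diff_distrib)
    finally show ?thesis .
  qed
  then have d2: "m dvd s * w * u - w" by simp
  have "int r * u - w = (int r - s * w) * u + (s * w * u - w)" by (simp add: algebra_simps)
  then have "m dvd int r * u - w" using d1 d2 by (metis dvd_add)
  then have "g * m dvd g * (int r * u - w)" by simp
  moreover have "int r * \<alpha> - \<beta> = g * (int r * u - w)" unfolding u w by (simp add: algebra_simps)
  ultimately have "int M dvd int r * \<alpha> - \<beta>" unfolding m by simp
  then show ?thesis using r(2) by blast
qed

lemma sands:
  assumes fin: "finite A" "finite B" and U1: "U M 1 A B" and M: "M > 0"
    and ab: "a \<in> A" "a' \<in> A" "b \<in> B" "b' \<in> B"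
    and div: "\<forall>d. d dvd int M \<longrightarrow> (d dvd (int a - int a') \<longleftrightarrow> d dvd (int b - int b'))"
  shows "a = a' \<and> b = b'"
proof -
  obtain r where r: "coprime r M" "int M dvd int r * (int a - int a') - (int b - int b')"
    using r_exists[OF M div] by blast
  have Ur: "U M r A B" using U_coprime[OF fin U1 M r(1)] .
  define x where "x = (r * a + b') mod M"
  have x: "x < M" unfolding x_def using M by simp
  have "int M dvd int (r * a + b') - int (r * a' + b)"
  proof -
    have eq: "int (r * a + b') - int (r * a' + b) = int r * (int a - int a') - (int b - int b')"
      by (simp add: algebra_simps)
    show ?thesis by (subst eq) (rule r(2))
  qed
  then have "int (r * a + b') mod int M = int (r * a' + b) mod int M"
    by (simp only: mod_eq_dvd_iff)
  then have e: "(r * a + b') mod M = (r * a' + b) mod M"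
    by (simp only: of_nat_mod[symmetric] of_nat_eq_iff)
  have hx1: "(r * a + b') mod M = x" by (simp only: x_def)
  have hx2: "(r * a' + b) mod M = x" using e hx1 by simp
  define S where "S = {p \<in> A \<times> B. (r * fst p + snd p) mod M = x}"
  have m1: "(a, b') \<in> S" unfolding S_def using ab hx1 by simp
  have m2: "(a', b) \<in> S" unfolding S_def using ab hx2 by simp
  have "card S = 1"
    using Ur x unfolding U_def cnt_def S_def by blast
  then obtain e where "S = {e}" by (rule card_1_singletonE)
  then have "(a, b') = (a', b)" using m1 m2 by simp
  then show ?thesis by simp
qed




lemma nat_abs_dvd_iff: "nat \<bar>d\<bar> dvd m \<longleftrightarrow> d dvd int m"
proof -
  have "nat \<bar>d\<bar> dvd m \<longleftrightarrow> int (nat \<bar>d\<bar>) dvd int m" by (simp only: int_dvd_int_iff)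
  also have "int (nat \<bar>d\<bar>) = \<bar>d\<bar>" by simp
  also have "\<bar>d\<bar> dvd int m \<longleftrightarrow> d dvd int m" by (rule abs_dvd_iff)
  finally show ?thesis .
qed

lemma sub_div:
  fixes p n R d :: nat
  assumes p: "prime p" and n: "n \<ge> 1" and d: "d dvd R * p ^ n" and nd: "\<not> p ^ n dvd d"
  shows "d dvd R * p ^ (n - 1)"
proof -
  obtain i where i: "i \<le> n" "gcd d (p ^ n) = p ^ i"
    using divides_primepow_nat[OF p, of "gcd d (p ^ n)" n] by auto
  have "i \<noteq> n"
  proof
    assume "i = n"
    then have "p ^ n dvd d" using i(2) by (metis gcd_dvd1)
    then show False using nd by simp
  qed
  then have "i \<le> n - 1" using i(1) by simp
  then have pi: "p ^ i dvd p ^ (n - 1)" by (rule le_imp_power_dvd)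
  have "d dvd gcd (R * d) (R * p ^ n)" using d by simp
  also have "gcd (R * d) (R * p ^ n) = R * gcd d (p ^ n)" by (simp add: gcd_mult_distrib_nat)
  also have "\<dots> = R * p ^ i" using i(2) by simp
  finally show ?thesis using pi by (meson dvd_trans mult_dvd_mono dvd_refl)
qed

lemma pair_gen:
  fixes R p n M :: nat and A B :: "nat set" and a a' b b' :: nat and \<delta> :: int
  assumes p: "prime p" and n: "n \<ge> 1" and MR: "M = R * p ^ n" and M: "M > 0"
    and fin: "finite A" "finite B" and U1: "U M 1 A B"
    and ab: "a \<in> A" "a' \<in> A" "b \<in> B" "b' \<in> B"
    and h: "int M dvd (int a + int b) - (int a' + int b') - \<delta>"
    and dR: "int (R * p ^ (n - 1)) dvd \<delta>" and nq: "\<not> int (p ^ n) dvd \<delta>"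
  shows "(int (p ^ n) dvd (int a - int a') \<longleftrightarrow> \<not> int (p ^ n) dvd (int b - int b')) \<and>
         int (p ^ (n - 1)) dvd (int a - int a') \<and> int (p ^ (n - 1)) dvd (int b - int b')"
proof -
  define \<alpha> where "\<alpha> = int a - int a'"
  define \<beta> where "\<beta> = int b - int b'"
  define q where "q = p ^ n"
  have hM: "int M dvd \<alpha> + \<beta> - \<delta>" using h unfolding \<alpha>_def \<beta>_def by (simp add: algebra_simps)
  have qM: "int q dvd int M" unfolding q_def MR by simp
  have key: "d dvd \<delta>" if dM: "d dvd int M" and dx: "d dvd x" and nx: "\<not> int q dvd x" for d x
  proof -
    have "\<not> int q dvd d" using dx nx dvd_trans by blast
    then have "\<not> p ^ n dvd nat \<bar>d\<bar>" unfolding q_def by simp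
    moreover have "nat \<bar>d\<bar> dvd R * p ^ n" using dM unfolding MR nat_abs_dvd_iff .
    ultimately have "nat \<bar>d\<bar> dvd R * p ^ (n - 1)" using sub_div[OF p n] by blast
    then have "d dvd int (R * p ^ (n - 1))" unfolding nat_abs_dvd_iff .
    then show ?thesis using dR by (rule dvd_trans)
  qed
  have C1: "int q dvd \<alpha> \<or> int q dvd \<beta>"
  proof (rule ccontr)
    assume nn: "\<not> (int q dvd \<alpha> \<or> int q dvd \<beta>)"
    have div: "\<forall>d. d dvd int M \<longrightarrow> (d dvd \<alpha> \<longleftrightarrow> d dvd \<beta>)"
    proof (intro allI impI iffI)
      fix d assume dM: "d dvd int M"
      then have d1: "d dvd \<alpha> + \<beta> - \<delta>" using hM by (rule dvd_trans)
      {
        assume "d dvd \<alpha>"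
        then have "d dvd \<delta>" using key[OF dM] nn by blast
        moreover have "\<beta> = (\<alpha> + \<beta> - \<delta>) - \<alpha> + \<delta>" by simp
        ultimately show "d dvd \<beta>" using d1 \<open>d dvd \<alpha>\<close> by (metis dvd_add dvd_diff)
      }
      {
        assume "d dvd \<beta>"
        then have "d dvd \<delta>" using key[OF dM] nn by blast
        moreover have "\<alpha> = (\<alpha> + \<beta> - \<delta>) - \<beta> + \<delta>" by simp
        ultimately show "d dvd \<alpha>" using d1 \<open>d dvd \<beta>\<close> by (metis dvd_add dvd_diff)
      }
    qed
    have "a = a' \<and> b = b'" using sands[OF fin U1 M ab] div unfolding \<alpha>_def \<beta>_def by blast
    then have "\<alpha> = 0" unfolding \<alpha>_def by simp
    then show False using nn by simp
  qed
  have C2: "\<not> (int q dvd \<alpha> \<and> int q dvd \<beta>)"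
  proof
    assume "int q dvd \<alpha> \<and> int q dvd \<beta>"
    then have "int q dvd \<alpha> + \<beta>" by simp
    moreover have "int q dvd \<alpha> + \<beta> - \<delta>" using qM hM by (rule dvd_trans)
    ultimately have "int q dvd (\<alpha> + \<beta>) - (\<alpha> + \<beta> - \<delta>)" by (rule dvd_diff)
    then show False using nq unfolding q_def by simp
  qed
  have pq: "int (p ^ (n - 1)) dvd int q" unfolding q_def int_dvd_int_iff
    by (rule le_imp_power_dvd) simp
  have "int (p ^ (n - 1)) dvd int (R * p ^ (n - 1))" unfolding int_dvd_int_iff by simp
  then have pd: "int (p ^ (n - 1)) dvd \<delta>" using dR by (rule dvd_trans)
  have pM: "int (p ^ (n - 1)) dvd \<alpha> + \<beta> - \<delta>" using pq qM hM by (meson dvd_trans)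
  have C3: "int (p ^ (n - 1)) dvd \<alpha> \<and> int (p ^ (n - 1)) dvd \<beta>"
  proof (cases "int q dvd \<alpha>")
    case True
    then have pa: "int (p ^ (n - 1)) dvd \<alpha>" using pq by (rule dvd_trans[rotated])
    have "\<beta> = (\<alpha> + \<beta> - \<delta>) - \<alpha> + \<delta>" by simp
    then have "int (p ^ (n - 1)) dvd \<beta>" using pa pM pd by (metis dvd_add dvd_diff)
    then show ?thesis using pa by simp
  next
    case False
    then have "int q dvd \<beta>" using C1 by simp
    then have pb: "int (p ^ (n - 1)) dvd \<beta>" using pq by (rule dvd_trans[rotated])
    have "\<alpha> = (\<alpha> + \<beta> - \<delta>) - \<beta> + \<delta>" by simp
    then have "int (p ^ (n - 1)) dvd \<alpha>" using pb pM pd by (metis dvd_add dvd_diff)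
    then show ?thesis using pb by simp
  qed
  show ?thesis using C1 C2 C3 unfolding \<alpha>_def \<beta>_def q_def by blast
qed

lemma dichotomy:
  fixes fa fb :: "'z \<Rightarrow> int" and q :: int
  assumes x: "\<forall>w\<in>Z. \<forall>w'\<in>Z. w \<noteq> w' \<longrightarrow> (q dvd fa w - fa w' \<longleftrightarrow> \<not> q dvd fb w - fb w')"
  shows "(\<forall>w\<in>Z. \<forall>w'\<in>Z. q dvd fa w - fa w') \<or> (\<forall>w\<in>Z. \<forall>w'\<in>Z. q dvd fb w - fb w')"
proof (rule ccontr)
  assume "\<not> ?thesis"
  then obtain w1 w2 u1 u2 where w: "w1 \<in> Z" "w2 \<in> Z" "\<not> q dvd fa w1 - fa w2"
    and u: "u1 \<in> Z" "u2 \<in> Z" "\<not> q dvd fb u1 - fb u2" by blast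
  have tr: "q dvd f x - f z" if "q dvd f x - f y" "q dvd f y - f z" for f :: "'z \<Rightarrow> int" and x y z
  proof -
    have "f x - f z = (f x - f y) + (f y - f z)" by simp
    then show ?thesis using that by (metis dvd_add)
  qed
  have sym: "q dvd f y - f x" if "q dvd f x - f y" for f :: "'z \<Rightarrow> int" and x y
  proof -
    have "f y - f x = - (f x - f y)" by simp
    then show ?thesis using that by (metis dvd_minus_iff)
  qed
  have refl: "q dvd f x - f x" for f :: "'z \<Rightarrow> int" and x by simp
  have w12: "w1 \<noteq> w2"
  proof
    assume "w1 = w2" then show False using w(3) by simp
  qed
  have b12: "q dvd fb w1 - fb w2" using x w w12 by blast
  have allb: "q dvd fb u - fb w1" if "u \<in> Z" for u
  proof (rule ccontr)
    assume nb: "\<not> q dvd fb u - fb w1"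
    then have "u \<noteq> w1" by auto
    then have au: "q dvd fa u - fa w1" using x that w(1) nb by blast
    have "u \<noteq> w2"
    proof
      assume "u = w2"
      then show False using au w(3) sym by blast
    qed
    have "\<not> q dvd fa u - fa w2"
    proof
      assume "q dvd fa u - fa w2"
      then have "q dvd fa w1 - fa w2" using au sym tr by blast
      then show False using w(3) by simp
    qed
    then have "q dvd fb u - fb w2" using x that w(2) \<open>u \<noteq> w2\<close> by blast
    then have "q dvd fb u - fb w1" using b12 sym tr by blast
    then show False using nb by simp
  qed
  have "q dvd fb u1 - fb u2" using allb[OF u(1)] allb[OF u(2)] sym tr by blast
  then show False using u(3) by simp
qed




locale L =
  fixes pi pj pk ni nj nk M z0 :: nat
    and A B :: "nat set"
    and kappa :: "nat \<Rightarrow> nat"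
    and lam :: "nat \<Rightarrow> nat"
  assumes primes: "prime pi" "prime pj" "prime pk"
    and distinct: "pi \<noteq> pj" "pj \<noteq> pk" "pi \<noteq> pk"
    and exps: "ni \<ge> 1" "nj \<ge> 1" "nk \<ge> 1"
    and Mdef: "M = pi ^ ni * pj ^ nj * pk ^ nk"
    and tile: "tiling M A B"
    and kappa_dir: "\<forall>a\<in>A. kappa a \<in> {pi, pj, pk} \<and>
          fibered M (A \<inter> Lam M a (M div (pi * pj * pk))) (kappa a)"
    and z0: "z0 < M"
    and lam_kappa: "\<forall>\<nu><pk. \<forall>a\<in>Sig M A B
          (sumset M (tr M ((z0 + \<nu> * (M div pk)) mod M) (fib M pi)) (fib M pj)).
          kappa a = lam \<nu>"
    and count: "\<forall>l\<in>{pi, pj}. card {\<nu>. \<nu> < pk \<and> lam \<nu> = l} \<ge> 2"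
begin

definition "ei = M div pi"
definition "ej = M div pj"
definition "ek = M div pk"
definition "q = pk ^ nk"
definition "D = M div (pi * pj * pk)"
definition "R = pi ^ ni * pj ^ nj"
definition "pt x y v = (z0 + x * ei + y * ej + v * ek) mod M"
definition "da w = fst (THE p. p \<in> A \<times> B \<and> (fst p + snd p) mod M = w)"
definition "db w = snd (THE p. p \<in> A \<times> B \<and> (fst p + snd p) mod M = w)"

lemma gt1: "pi > 1" "pj > 1" "pk > 1"
  using primes prime_gt_1_nat by auto

lemma Mpos: "M > 0"
  using gt1 Mdef by simp

lemma M_R: "M = R * pk ^ nk"
  unfolding Mdef R_def by simp

lemma ek_eq: "ek = R * pk ^ (nk - 1)" and pk_ek: "pk * ek = M"
proof -
  have "pk ^ nk = pk * pk ^ (nk - 1)" using exps by (metis Suc_diff_1 less_le_trans power_Suc zero_less_one)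
  then have M1: "M = pk * (R * pk ^ (nk - 1))" using M_R by simp
  then show "ek = R * pk ^ (nk - 1)" unfolding ek_def using gt1 by simp
  then show "pk * ek = M" using M1 by simp
qed

lemma ei_eq: "ei = pi ^ (ni - 1) * pj ^ nj * pk ^ nk" and pi_ei: "pi * ei = M"
proof -
  have "pi ^ ni = pi * pi ^ (ni - 1)" using exps by (metis Suc_diff_1 less_le_trans power_Suc zero_less_one)
  then have M1: "M = pi * (pi ^ (ni - 1) * pj ^ nj * pk ^ nk)" using Mdef by simp
  then show "ei = pi ^ (ni - 1) * pj ^ nj * pk ^ nk" unfolding ei_def using gt1 by simp
  then show "pi * ei = M" using M1 by simp
qed

lemma ej_eq: "ej = pi ^ ni * pj ^ (nj - 1) * pk ^ nk" and pj_ej: "pj * ej = M"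
proof -
  have "pj ^ nj = pj * pj ^ (nj - 1)" using exps by (metis Suc_diff_1 less_le_trans power_Suc zero_less_one)
  then have M1: "M = pj * (pi ^ ni * pj ^ (nj - 1) * pk ^ nk)" using Mdef by simp
  then show "ej = pi ^ ni * pj ^ (nj - 1) * pk ^ nk" unfolding ej_def using gt1 by simp
  then show "pj * ej = M" using M1 by simp
qed

lemma q_dvd: "q dvd M" "q dvd ei" "q dvd ej"
  unfolding q_def using Mdef ei_eq ej_eq by simp_all

lemma D_eq: "D = pi ^ (ni - 1) * pj ^ (nj - 1) * pk ^ (nk - 1)"
  and ei_D: "ei = D * (pj * pk)" and ej_D: "ej = D * (pi * pk)" and ek_D: "ek = D * (pi * pj)"
proof -
  have a: "pi ^ ni = pi * pi ^ (ni - 1)" using exps by (metis Suc_diff_1 less_le_trans power_Suc zero_less_one)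
  have b: "pj ^ nj = pj * pj ^ (nj - 1)" using exps by (metis Suc_diff_1 less_le_trans power_Suc zero_less_one)
  have c: "pk ^ nk = pk * pk ^ (nk - 1)" using exps by (metis Suc_diff_1 less_le_trans power_Suc zero_less_one)
  have M1: "M = (pi * pj * pk) * (pi ^ (ni - 1) * pj ^ (nj - 1) * pk ^ (nk - 1))"
    using Mdef a b c by (simp add: ac_simps)
  show D: "D = pi ^ (ni - 1) * pj ^ (nj - 1) * pk ^ (nk - 1)"
    unfolding D_def using gt1 M1 by simp
  show "ei = D * (pj * pk)" unfolding ei_eq D using b c by (simp add: ac_simps)
  show "ej = D * (pi * pk)" unfolding ej_eq D using a c by (simp add: ac_simps)
  show "ek = D * (pi * pj)" unfolding ek_eq D R_def using a b by (simp add: ac_simps)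
qed

lemma AB_sub: "A \<subseteq> {0..<M}" "B \<subseteq> {0..<M}"
  using tile unfolding tiling_def by auto

lemma finAB: "finite A" "finite B"
  using AB_sub finite_subset by blast+

lemma ex1: "x < M \<Longrightarrow> \<exists>!p. p \<in> A \<times> B \<and> (fst p + snd p) mod M = x"
  using tile unfolding tiling_def by blast

lemma dec: assumes "w < M" shows "da w \<in> A" "db w \<in> B" "(da w + db w) mod M = w"
proof -
  have "(THE p. p \<in> A \<times> B \<and> (fst p + snd p) mod M = w) \<in> A \<times> B \<and>
        (fst (THE p. p \<in> A \<times> B \<and> (fst p + snd p) mod M = w) + snd (THE p. p \<in> A \<times> B \<and> (fst p + snd p) mod M = w)) mod M = w"
    using theI'[OF ex1[OF assms]] by blast
  then show "da w \<in> A" "db w \<in> B" "(da w + db w) mod M = w"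
    unfolding da_def db_def by auto
qed

lemma dec_uniq:
  assumes "a \<in> A" "b \<in> B" "(a + b) mod M = w"
  shows "da w = a" "db w = b"
proof -
  have w: "w < M" using assms(3) Mpos by auto
  have "(THE p. p \<in> A \<times> B \<and> (fst p + snd p) mod M = w) = (a, b)"
    by (rule the1_equality[OF ex1[OF w]]) (use assms in auto)
  then show "da w = a" "db w = b" unfolding da_def db_def by auto
qed

lemma U1: "U M 1 A B"
  unfolding U_def cnt_def
proof (intro allI impI)
  fix x assume x: "x < M"
  have "{p \<in> A \<times> B. (1 * fst p + snd p) mod M = x} = {(da x, db x)}"
  proof (intro equalityI subsetI)
    fix p assume "p \<in> {p \<in> A \<times> B. (1 * fst p + snd p) mod M = x}"
    then show "p \<in> {(da x, db x)}" using dec_uniq[of "fst p" "snd p" x] by (cases p) auto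
  next
    fix p assume "p \<in> {(da x, db x)}"
    then show "p \<in> {p \<in> A \<times> B. (1 * fst p + snd p) mod M = x}" using dec[OF x] by auto
  qed
  then show "card {p \<in> A \<times> B. (1 * fst p + snd p) mod M = x} = 1" by simp
qed

end



context L
begin

lemma decomp_mod:
  fixes C :: int and p e :: nat
  assumes "p * e = M"
  shows "C * int e = (C div int p) * int M + (C mod int p) * int e"
proof -
  have h: "(C div int p) * int p + C mod int p = C" by (rule div_mult_mod_eq)
  have h2: "(C div int p) * (int p * int e) + (C mod int p) * int e = ((C div int p) * int p + C mod int p) * int e"
    by (simp only: distrib_right mult.assoc)
  have h3: "int p * int e = int M" using assms by (metis of_nat_mult)
  show ?thesis using h h2 h3 by simp
qed

lemma D_comb: "\<exists>c1 c2 c3 :: int. int D = c1 * int ei + c2 * int ej + c3 * int ek"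
proof -
  have cji: "coprime pj pi" using primes distinct by (simp add: primes_coprime)
  have "gcd (pk * pj) (pk * pi) = pk * gcd pj pi" by (simp add: gcd_mult_distrib_nat)
  then have g1: "gcd (pj * pk) (pi * pk) = pk" using cji by (simp add: ac_simps coprime_iff_gcd_eq_1)
  obtain u1 v1 :: int where uv1: "u1 * int (pj * pk) + v1 * int (pi * pk) = gcd (int (pj * pk)) (int (pi * pk))"
    using bezout_int by blast
  have uv1': "u1 * int (pj * pk) + v1 * int (pi * pk) = int pk" using uv1 unfolding gcd_int_int_eq g1 .
  have "coprime pk (pi * pj)" using primes distinct by (simp add: primes_coprime)
  then have g2: "gcd pk (pi * pj) = 1" by (simp add: coprime_iff_gcd_eq_1)
  obtain u2 v2 :: int where uv2: "u2 * int pk + v2 * int (pi * pj) = gcd (int pk) (int (pi * pj))"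
    using bezout_int by blast
  have uv2': "u2 * int pk + v2 * int (pi * pj) = 1" using uv2 unfolding gcd_int_int_eq g2 by simp
  have "int D = int D * (u2 * int pk + v2 * int (pi * pj))" using uv2' by simp
  also have "\<dots> = u2 * (int D * int pk) + v2 * (int D * int (pi * pj))" by (simp add: algebra_simps)
  also have "int D * int pk = int D * (u1 * int (pj * pk) + v1 * int (pi * pk))" using uv1' by simp
  finally have "int D = (u2 * u1) * int (D * (pj * pk)) + (u2 * v1) * int (D * (pi * pk)) + v2 * int (D * (pi * pj))"
    by (simp add: algebra_simps)
  then show ?thesis unfolding ei_D[symmetric] ej_D[symmetric] ek_D[symmetric] by blast
qed

lemma coord:
  assumes "z \<in> Lam M z0 D"
  shows "\<exists>x<pi. \<exists>y<pj. \<exists>v<pk. z = pt x y v"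
proof -
  have zM: "z < M" and Dd: "int D dvd int z0 - int z" using assms unfolding Lam_def by auto
  obtain c1 c2 c3 :: int where c: "int D = c1 * int ei + c2 * int ej + c3 * int ek" using D_comb by blast
  obtain t where t: "int z0 - int z = int D * t" using Dd by (auto elim: dvdE)
  define C1 where "C1 = - t * c1"
  define C2 where "C2 = - t * c2"
  define C3 where "C3 = - t * c3"
  have z: "int z = int z0 + C1 * int ei + C2 * int ej + C3 * int ek"
  proof -
    have "int z = int z0 - int D * t" using t by simp
    also have "\<dots> = int z0 + C1 * int ei + C2 * int ej + C3 * int ek"
      unfolding c C1_def C2_def C3_def by (simp add: algebra_simps)
    finally show ?thesis .
  qed
  define x where "x = nat (C1 mod int pi)"
  define y where "y = nat (C2 mod int pj)"
  define v where "v = nat (C3 mod int pk)"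
  have pos: "int pi > 0" "int pj > 0" "int pk > 0" using gt1 by auto
  have x1: "int x = C1 mod int pi" unfolding x_def using pos by simp
  have "C1 mod int pi < int pi" using pos by simp
  then have x: "int x = C1 mod int pi" "x < pi" using x1 by linarith+
  have y1: "int y = C2 mod int pj" unfolding y_def using pos by simp
  have "C2 mod int pj < int pj" using pos by simp
  then have y: "int y = C2 mod int pj" "y < pj" using y1 by linarith+
  have v1: "int v = C3 mod int pk" unfolding v_def using pos by simp
  have "C3 mod int pk < int pk" using pos by simp
  then have v: "int v = C3 mod int pk" "v < pk" using v1 by linarith+
  have "int z = int z0 + int x * int ei + int y * int ej + int v * int ek
        + int M * (C1 div int pi + C2 div int pj + C3 div int pk)"
    unfolding z decomp_mod[OF pi_ei, of C1] decomp_mod[OF pj_ej, of C2] decomp_mod[OF pk_ek, of C3] x y v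
    by (simp add: algebra_simps)
  then have "int z = int (z0 + x * ei + y * ej + v * ek) + int M * (C1 div int pi + C2 div int pj + C3 div int pk)"
    by simp
  then have "int z mod int M = int (z0 + x * ei + y * ej + v * ek) mod int M"
    by simp
  then have "z mod M = (z0 + x * ei + y * ej + v * ek) mod M"
    by (simp only: of_nat_mod[symmetric] of_nat_eq_iff)
  then have "z = pt x y v" unfolding pt_def using zM by simp
  then show ?thesis using x y v by blast
qed

end



context L
begin

lemma pt_lt: "pt x y v < M"
  unfolding pt_def using Mpos by simp

lemma pt_plane:
  assumes x: "x < pi" and y: "y < pj"
  shows "pt x y v \<in> sumset M (tr M ((z0 + v * (M div pk)) mod M) (fib M pi)) (fib M pj)"
proof -
  have e1: "(((z0 + v * ek) mod M + x * ei) mod M + y * ej) mod M = ((z0 + v * ek) mod M + x * ei + y * ej) mod M"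
    by (rule mod_add_left_eq)
  have e2: "((z0 + v * ek) mod M + x * ei + y * ej) mod M = ((z0 + v * ek) + (x * ei + y * ej)) mod M"
    by (metis add.assoc mod_add_left_eq)
  have e3: "(z0 + v * ek) + (x * ei + y * ej) = z0 + x * ei + y * ej + v * ek" by simp
  have eq: "pt x y v = (((z0 + v * ek) mod M + x * ei) mod M + y * ej) mod M"
    unfolding pt_def e1 e2 e3 ..
  have u: "((z0 + v * ek) mod M + x * ei) mod M \<in> tr M ((z0 + v * (M div pk)) mod M) (fib M pi)"
    unfolding tr_def fib_def ek_def ei_def using x by blast
  have w: "y * ej \<in> fib M pj" unfolding fib_def ej_def using y by blast
  show ?thesis unfolding sumset_def using eq u w by blast
qed

lemma kappa_pt:
  assumes x: "x < pi" and y: "y < pj" and v: "v < pk"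
  shows "kappa (da (pt x y v)) = lam v"
proof -
  let ?w = "pt x y v"
  have d: "da ?w \<in> A" "db ?w \<in> B" "(da ?w + db ?w) mod M = ?w" using dec[OF pt_lt] by auto
  have "(da ?w + db ?w) mod M \<in> sumset M (tr M ((z0 + v * (M div pk)) mod M) (fib M pi)) (fib M pj)"
    using d(3) pt_plane[OF x y, of v] by simp
  then have "da ?w \<in> Sig M A B (sumset M (tr M ((z0 + v * (M div pk)) mod M) (fib M pi)) (fib M pj))"
    unfolding Sig_def using d(1,2) by blast
  then show ?thesis using lam_kappa v by blast
qed

lemma step_fib:
  assumes a: "a \<in> A" and k: "kappa a = p" and p: "p > 1"
  shows "(a + M div p) mod M \<in> A"
proof -
  define Y where "Y = A \<inter> Lam M a (M div (pi * pj * pk))"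
  have fib: "fibered M Y p" using kappa_dir a k unfolding Y_def by auto
  have aM: "a < M" using a AB_sub by auto
  have aY: "a \<in> Y" unfolding Y_def Lam_def using a aM by simp
  have "tr M a (fib M p) \<subseteq> Y" using fib aY unfolding fibered_def by blast
  moreover have "(a + M div p) mod M \<in> tr M a (fib M p)"
    unfolding tr_def fib_def using p by force
  ultimately show ?thesis unfolding Y_def by blast
qed

lemma mod_shift_eq:
  fixes w e :: nat
  shows "((w mod M) + e) mod M = (w + e) mod M"
  by (rule mod_add_left_eq)

lemma shiftI:
  assumes v: "v < pk" and l: "lam v = pi" and x: "x < pi" and y: "y < pj"
  shows "da (pt (Suc x) y v) = (da (pt x y v) + ei) mod M \<and> db (pt (Suc x) y v) = db (pt x y v)"
proof -
  let ?w = "pt x y v"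
  define a where "a = da ?w"
  define b where "b = db ?w"
  have d: "a \<in> A" "b \<in> B" "(a + b) mod M = ?w" using dec[OF pt_lt] unfolding a_def b_def by auto
  have "kappa a = pi" using kappa_pt[OF x y v] l unfolding a_def by simp
  then have a': "(a + ei) mod M \<in> A" using step_fib[OF d(1)] gt1 unfolding ei_def by blast
  have "((a + ei) mod M + b) mod M = (a + ei + b) mod M"
    by (rule mod_add_left_eq)
  also have "\<dots> = (a + b + ei) mod M" by (simp add: add_ac)
  also have "\<dots> = ((a + b) mod M + ei) mod M" by (simp add: mod_add_left_eq)
  also have "\<dots> = (?w + ei) mod M" using d(3) by simp
  also have "\<dots> = (z0 + x * ei + y * ej + v * ek + ei) mod M" unfolding pt_def by (rule mod_add_left_eq)
  also have "\<dots> = pt (Suc x) y v" unfolding pt_def by (simp add: add_ac)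
  finally have "((a + ei) mod M + b) mod M = pt (Suc x) y v" .
  from dec_uniq[OF a' d(2) this] show ?thesis unfolding a_def b_def by simp
qed

lemma shiftJ:
  assumes v: "v < pk" and l: "lam v = pj" and x: "x < pi" and y: "y < pj"
  shows "da (pt x (Suc y) v) = (da (pt x y v) + ej) mod M \<and> db (pt x (Suc y) v) = db (pt x y v)"
proof -
  let ?w = "pt x y v"
  define a where "a = da ?w"
  define b where "b = db ?w"
  have d: "a \<in> A" "b \<in> B" "(a + b) mod M = ?w" using dec[OF pt_lt] unfolding a_def b_def by auto
  have "kappa a = pj" using kappa_pt[OF x y v] l unfolding a_def by simp
  then have a': "(a + ej) mod M \<in> A" using step_fib[OF d(1)] gt1 unfolding ej_def by blast
  have "((a + ej) mod M + b) mod M = (a + ej + b) mod M"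
    by (rule mod_add_left_eq)
  also have "\<dots> = (a + b + ej) mod M" by (simp add: add_ac)
  also have "\<dots> = ((a + b) mod M + ej) mod M" by (simp add: mod_add_left_eq)
  also have "\<dots> = (?w + ej) mod M" using d(3) by simp
  also have "\<dots> = (z0 + x * ei + y * ej + v * ek + ej) mod M" unfolding pt_def by (rule mod_add_left_eq)
  also have "\<dots> = pt x (Suc y) v" unfolding pt_def by (simp add: add_ac)
  finally have "((a + ej) mod M + b) mod M = pt x (Suc y) v" .
  from dec_uniq[OF a' d(2) this] show ?thesis unfolding a_def b_def by simp
qed

end



context L
begin

lemma not_dvd_delta:
  assumes v: "v < pk" "v' < pk" "v \<noteq> v'"
  shows "\<not> int (pk ^ nk) dvd (int v - int v') * int ek"
proof
  assume h: "int (pk ^ nk) dvd (int v - int v') * int ek"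
  define c where "c = nat \<bar>int v - int v'\<bar>"
  have c0: "c > 0" and cp: "c < pk" unfolding c_def using v by auto
  have "nat \<bar>(int v - int v') * int ek\<bar> = c * ek" unfolding c_def nat_abs_mult_distrib by simp
  then have "pk ^ nk dvd c * ek" using h by (metis dvd_nat_abs_iff)
  moreover have "pk ^ nk = pk ^ (nk - 1) * pk" using exps
    by (metis Suc_diff_1 less_le_trans power_Suc2 zero_less_one)
  moreover have "c * ek = pk ^ (nk - 1) * (c * R)" unfolding ek_eq by (simp add: ac_simps)
  ultimately have "pk ^ (nk - 1) * pk dvd pk ^ (nk - 1) * (c * R)" by simp
  then have "pk dvd c * R" using gt1 by simp
  then have "pk dvd c \<or> pk dvd R" using primes(3) by (simp add: prime_dvd_mult_iff)
  then show False
  proof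
    assume "pk dvd c"
    then have "pk \<le> c" using c0 by (simp add: dvd_imp_le)
    then show False using cp by simp
  next
    assume "pk dvd R"
    then have "pk dvd pi ^ ni \<or> pk dvd pj ^ nj" unfolding R_def using primes(3) by (simp add: prime_dvd_mult_iff)
    then have "pk dvd pi \<or> pk dvd pj" using primes(3) by (meson prime_dvd_power)
    then have "pk = pi \<or> pk = pj" using primes by (meson primes_dvd_imp_eq)
    then show False using distinct by auto
  qed
qed

lemma int_mod_dvd:
  fixes s w :: nat
  assumes "s mod M = w"
  shows "int M dvd int s - int w"
proof -
  have "w < M" using assms Mpos by auto
  then have "int s mod int M = int w mod int M" using assms by (metis mod_less of_nat_mod)
  then show ?thesis by (simp only: mod_eq_dvd_iff)
qed

lemma pair_pt:
  fixes x y :: nat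
  assumes v: "v < pk" "v' < pk" "v \<noteq> v'"
  defines "\<alpha> \<equiv> int (da (pt x y v)) - int (da (pt x y v'))"
    and "\<beta> \<equiv> int (db (pt x y v)) - int (db (pt x y v'))"
  shows "(int q dvd \<alpha> \<longleftrightarrow> \<not> int q dvd \<beta>) \<and> int (pk ^ (nk - 1)) dvd \<alpha> \<and> int (pk ^ (nk - 1)) dvd \<beta>"
proof -
  let ?w = "pt x y v" and ?w' = "pt x y v'"
  have d: "da ?w \<in> A" "db ?w \<in> B" "(da ?w + db ?w) mod M = ?w" using dec[OF pt_lt] by auto
  have d': "da ?w' \<in> A" "db ?w' \<in> B" "(da ?w' + db ?w') mod M = ?w'" using dec[OF pt_lt] by auto
  define S where "S = z0 + x * ei + y * ej + v * ek"
  define S' where "S' = z0 + x * ei + y * ej + v' * ek"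
  have h1: "int M dvd int (da ?w + db ?w) - int S"
  proof -
    have "(da ?w + db ?w) mod M = S mod M" using d(3) unfolding pt_def S_def .
    then have "int (da ?w + db ?w) mod int M = int S mod int M" by (metis of_nat_mod)
    then show ?thesis by (simp only: mod_eq_dvd_iff)
  qed
  have h2: "int M dvd int (da ?w' + db ?w') - int S'"
  proof -
    have "(da ?w' + db ?w') mod M = S' mod M" using d'(3) unfolding pt_def S'_def .
    then have "int (da ?w' + db ?w') mod int M = int S' mod int M" by (metis of_nat_mod)
    then show ?thesis by (simp only: mod_eq_dvd_iff)
  qed
  define \<delta> where "\<delta> = (int v - int v') * int ek"
  have "(int (da ?w) + int (db ?w)) - (int (da ?w') + int (db ?w')) - \<delta> =
        (int (da ?w + db ?w) - int S) - (int (da ?w' + db ?w') - int S')"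
    unfolding \<delta>_def S_def S'_def by (simp add: algebra_simps)
  then have h: "int M dvd (int (da ?w) + int (db ?w)) - (int (da ?w') + int (db ?w')) - \<delta>"
    using h1 h2 by (metis dvd_diff)
  have dR: "int (R * pk ^ (nk - 1)) dvd \<delta>" unfolding \<delta>_def ek_eq by simp
  have nq: "\<not> int (pk ^ nk) dvd \<delta>" unfolding \<delta>_def using not_dvd_delta[OF v] .
  have "(int (pk ^ nk) dvd int (da ?w) - int (da ?w') \<longleftrightarrow> \<not> int (pk ^ nk) dvd int (db ?w) - int (db ?w')) \<and>
        int (pk ^ (nk - 1)) dvd int (da ?w) - int (da ?w') \<and> int (pk ^ (nk - 1)) dvd int (db ?w) - int (db ?w')"
    by (rule pair_gen[OF primes(3) exps(3) M_R Mpos finAB U1 d(1) d'(1) d(2) d'(2) h dR nq])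
  then show ?thesis unfolding \<alpha>_def \<beta>_def q_def .
qed

definition "ParA x y \<longleftrightarrow> (\<forall>v<pk. \<forall>v'<pk. int q dvd int (da (pt x y v)) - int (da (pt x y v')))"
definition "ParB x y \<longleftrightarrow> (\<forall>v<pk. \<forall>v'<pk. int q dvd int (db (pt x y v)) - int (db (pt x y v')))"

lemma PA_or_PB: "ParA x y \<or> ParB x y"
proof -
  have "(\<forall>w\<in>{v. v < pk}. \<forall>w'\<in>{v. v < pk}. int q dvd int (da (pt x y w)) - int (da (pt x y w'))) \<or>
        (\<forall>w\<in>{v. v < pk}. \<forall>w'\<in>{v. v < pk}. int q dvd int (db (pt x y w)) - int (db (pt x y w')))"
    by (rule dichotomy) (use pair_pt in blast)
  then show ?thesis unfolding ParA_def ParB_def by auto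
qed

lemma PA_iff:
  assumes v: "v1 < pk" "v2 < pk" "v1 \<noteq> v2"
  shows "ParA x y \<longleftrightarrow> int q dvd int (da (pt x y v1)) - int (da (pt x y v2))"
proof
  assume "ParA x y" then show "int q dvd int (da (pt x y v1)) - int (da (pt x y v2))"
    unfolding ParA_def using v by blast
next
  assume h: "int q dvd int (da (pt x y v1)) - int (da (pt x y v2))"
  show "ParA x y"
  proof (rule ccontr)
    assume "\<not> ParA x y"
    then have "ParB x y" using PA_or_PB by blast
    then have "int q dvd int (db (pt x y v1)) - int (db (pt x y v2))" unfolding ParB_def using v by blast
    then show False using h pair_pt[OF v, of x y] by blast
  qed
qed

lemma modq:
  fixes a1 a2 e :: nat
  assumes "q dvd e"
  shows "int q dvd int ((a1 + e) mod M) - int ((a2 + e) mod M) \<longleftrightarrow> int q dvd int a1 - int a2"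
proof -
  have r: "int ((a + e) mod M) = int a + int e - int M * int ((a + e) div M)" for a
  proof -
    have "(a + e) div M * M + (a + e) mod M = a + e" by (rule div_mult_mod_eq)
    then have "int ((a + e) div M) * int M + int ((a + e) mod M) = int a + int e" by (metis of_nat_add of_nat_mult)
    then show ?thesis by (simp add: algebra_simps)
  qed
  have "int ((a1 + e) mod M) - int ((a2 + e) mod M) = (int a1 - int a2) + int M * (int ((a2 + e) div M) - int ((a1 + e) div M))"
    unfolding r by (simp add: algebra_simps)
  moreover have "int q dvd int M * (int ((a2 + e) div M) - int ((a1 + e) div M))"
    using q_dvd(1) by simp
  ultimately show ?thesis by (simp add: dvd_add_left_iff)
qed

lemma two_elems:
  assumes "card S \<ge> 2"
  shows "\<exists>a b. a \<in> S \<and> b \<in> S \<and> a \<noteq> b"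
proof -
  have "finite S" using assms by (metis card.infinite not_numeral_le_zero)
  have "S \<noteq> {}" using assms by auto
  then obtain a where a: "a \<in> S" by blast
  have c1: "card (S - {a}) \<ge> 1" using assms a \<open>finite S\<close> by simp
  have "S - {a} \<noteq> {}"
  proof
    assume e: "S - {a} = {}"
    show False using c1 unfolding e by simp
  qed
  then obtain b where "b \<in> S - {a}" by blast
  then show ?thesis using a by blast
qed

lemma invI:
  assumes x: "x < pi" and y: "y < pj"
  shows "ParA (Suc x) y \<longleftrightarrow> ParA x y"
proof -
  obtain v1 v2 where v: "v1 \<in> {v. v < pk \<and> lam v = pi}" "v2 \<in> {v. v < pk \<and> lam v = pi}" "v1 \<noteq> v2"
    using two_elems count by blast
  have v': "v1 < pk" "v2 < pk" using v by auto
  have "ParA (Suc x) y \<longleftrightarrow> int q dvd int (da (pt (Suc x) y v1)) - int (da (pt (Suc x) y v2))"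
    using PA_iff[OF v' v(3)] .
  also have "\<dots> \<longleftrightarrow> int q dvd int ((da (pt x y v1) + ei) mod M) - int ((da (pt x y v2) + ei) mod M)"
    using shiftI[OF v'(1) _ x y] shiftI[OF v'(2) _ x y] v by simp
  also have "\<dots> \<longleftrightarrow> int q dvd int (da (pt x y v1)) - int (da (pt x y v2))"
    by (rule modq[OF q_dvd(2)])
  also have "\<dots> \<longleftrightarrow> ParA x y" using PA_iff[OF v' v(3)] by simp
  finally show ?thesis .
qed

lemma invJ:
  assumes x: "x < pi" and y: "y < pj"
  shows "ParA x (Suc y) \<longleftrightarrow> ParA x y"
proof -
  obtain v1 v2 where v: "v1 \<in> {v. v < pk \<and> lam v = pj}" "v2 \<in> {v. v < pk \<and> lam v = pj}" "v1 \<noteq> v2"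
    using two_elems count by blast
  have v': "v1 < pk" "v2 < pk" using v by auto
  have "ParA x (Suc y) \<longleftrightarrow> int q dvd int (da (pt x (Suc y) v1)) - int (da (pt x (Suc y) v2))"
    using PA_iff[OF v' v(3)] .
  also have "\<dots> \<longleftrightarrow> int q dvd int ((da (pt x y v1) + ej) mod M) - int ((da (pt x y v2) + ej) mod M)"
    using shiftJ[OF v'(1) _ x y] shiftJ[OF v'(2) _ x y] v by simp
  also have "\<dots> \<longleftrightarrow> int q dvd int (da (pt x y v1)) - int (da (pt x y v2))"
    by (rule modq[OF q_dvd(3)])
  also have "\<dots> \<longleftrightarrow> ParA x y" using PA_iff[OF v' v(3)] by simp
  finally show ?thesis .
qed

lemma PA_const:
  assumes x: "x < pi" and y: "y < pj"
  shows "ParA x y \<longleftrightarrow> ParA 0 0"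
proof -
  have "ParA x y \<longleftrightarrow> ParA 0 y" using x
  proof (induction x)
    case 0 then show ?case by simp
  next
    case (Suc x) then show ?case using invI[of x y] y by simp
  qed
  also have "ParA 0 y \<longleftrightarrow> ParA 0 0" using y
  proof (induction y)
    case 0 then show ?case by simp
  next
    case (Suc y) then show ?case using invJ[of 0 y] gt1 by simp
  qed
  finally show ?thesis .
qed

end



context L
begin

lemma pt_mod: "pt x y c = pt x y (c mod pk)"
proof -
  define S0 where "S0 = z0 + x * ei + y * ej"
  have h: "c div pk * pk + c mod pk = c" by (rule div_mult_mod_eq)
  have "c * ek = (c div pk * pk + c mod pk) * ek" by (simp only: h)
  also have "\<dots> = c mod pk * ek + (c div pk) * (pk * ek)" by (simp only: distrib_right mult.assoc add.commute)
  finally have ce: "c * ek = c mod pk * ek + (c div pk) * M" using pk_ek by simp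
  have "pt x y c = (S0 + c * ek) mod M" unfolding pt_def S0_def ..
  also have "\<dots> = (S0 + c mod pk * ek + (c div pk) * M) mod M" unfolding ce by (simp add: add.assoc)
  also have "\<dots> = (S0 + c mod pk * ek) mod M" by (rule mod_mult_self1)
  also have "\<dots> = pt x y (c mod pk)" unfolding pt_def S0_def ..
  finally show ?thesis .
qed

lemma fiber_pt:
  assumes w: "w \<in> tr M (pt x y m) (fib M pk)"
  shows "\<exists>v<pk. w = pt x y v"
proof -
  obtain t where t: "t < pk" "w = (pt x y m + t * ek) mod M"
    using w unfolding tr_def fib_def ek_def by blast
  define S0 where "S0 = z0 + x * ei + y * ej"
  have "w = ((S0 + m * ek) mod M + t * ek) mod M" using t(2) unfolding pt_def S0_def by simp
  also have "\<dots> = (S0 + m * ek + t * ek) mod M" by (rule mod_add_left_eq)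
  also have "S0 + m * ek + t * ek = S0 + (m + t) * ek" by (simp add: algebra_simps)
  also have "(S0 + (m + t) * ek) mod M = pt x y (m + t)" unfolding pt_def S0_def ..
  also have "\<dots> = pt x y ((m + t) mod pk)" by (rule pt_mod)
  finally have "w = pt x y ((m + t) mod pk)" .
  moreover have "(m + t) mod pk < pk" using gt1 by simp
  ultimately show ?thesis by blast
qed

lemma sigA:
  assumes "a \<in> Sig M A B (tr M (pt x y m) (fib M pk))"
  shows "\<exists>v<pk. a = da (pt x y v)"
proof -
  obtain b where ab: "a \<in> A" "b \<in> B" "(a + b) mod M \<in> tr M (pt x y m) (fib M pk)"
    using assms unfolding Sig_def by blast
  obtain v where v: "v < pk" "(a + b) mod M = pt x y v" using fiber_pt[OF ab(3)] by blast
  have "da (pt x y v) = a" using dec_uniq[OF ab(1,2) v(2)] by simp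
  then show ?thesis using v(1) by metis
qed

lemma sigB:
  assumes "b \<in> Sig M B A (tr M (pt x y m) (fib M pk))"
  shows "\<exists>v<pk. b = db (pt x y v)"
proof -
  obtain a where ab: "b \<in> B" "a \<in> A" "(b + a) mod M \<in> tr M (pt x y m) (fib M pk)"
    using assms unfolding Sig_def by blast
  obtain v where v: "v < pk" "(a + b) mod M = pt x y v" using fiber_pt[OF ab(3)] by (metis add.commute)
  have "db (pt x y v) = b" using dec_uniq[OF ab(2,1) v(2)] by simp
  then show ?thesis using v(1) by metis
qed

lemma splitA:
  assumes P: "ParA x y"
  shows "splits M A B pk nk (tr M (pt x y m) (fib M pk))"
  unfolding splits_def
proof (intro conjI ballI impI)
  fix a a' assume "a \<in> Sig M A B (tr M (pt x y m) (fib M pk))" "a' \<in> Sig M A B (tr M (pt x y m) (fib M pk))"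
  then obtain v v' where "v < pk" "a = da (pt x y v)" "v' < pk" "a' = da (pt x y v')"
    using sigA by metis
  then show "int (pk ^ nk) dvd int a - int a'" using P unfolding ParA_def q_def by blast
next
  fix b b' assume "b \<in> Sig M B A (tr M (pt x y m) (fib M pk))" "b' \<in> Sig M B A (tr M (pt x y m) (fib M pk))"
    and bb: "b \<noteq> b'"
  then obtain v v' where v: "v < pk" "b = db (pt x y v)" "v' < pk" "b' = db (pt x y v')"
    using sigB by metis
  have vv: "v \<noteq> v'" using bb v by auto
  have qa: "int q dvd int (da (pt x y v)) - int (da (pt x y v'))" using P v unfolding ParA_def by blast
  have pp: "(int q dvd int (da (pt x y v)) - int (da (pt x y v')) \<longleftrightarrow> \<not> int q dvd int (db (pt x y v)) - int (db (pt x y v'))) \<and>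
    int (pk ^ (nk - 1)) dvd int (da (pt x y v)) - int (da (pt x y v')) \<and>
    int (pk ^ (nk - 1)) dvd int (db (pt x y v)) - int (db (pt x y v'))"
    using pair_pt[OF v(1) v(3) vv, of x y] by simp
  show "int (pk ^ (nk - 1)) dvd int b - int b'" using pp v by simp
  show "\<not> int (pk ^ nk) dvd int b - int b'" using pp qa v unfolding q_def by simp
qed

lemma splitB:
  assumes P: "ParB x y"
  shows "splits M B A pk nk (tr M (pt x y m) (fib M pk))"
  unfolding splits_def
proof (intro conjI ballI impI)
  fix b b' assume "b \<in> Sig M B A (tr M (pt x y m) (fib M pk))" "b' \<in> Sig M B A (tr M (pt x y m) (fib M pk))"
  then obtain v v' where "v < pk" "b = db (pt x y v)" "v' < pk" "b' = db (pt x y v')"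
    using sigB by metis
  then show "int (pk ^ nk) dvd int b - int b'" using P unfolding ParB_def q_def by blast
next
  fix a a' assume "a \<in> Sig M A B (tr M (pt x y m) (fib M pk))" "a' \<in> Sig M A B (tr M (pt x y m) (fib M pk))"
    and aa: "a \<noteq> a'"
  then obtain v v' where v: "v < pk" "a = da (pt x y v)" "v' < pk" "a' = da (pt x y v')"
    using sigA by metis
  have vv: "v \<noteq> v'" using aa v by auto
  have qb: "int q dvd int (db (pt x y v)) - int (db (pt x y v'))" using P v unfolding ParB_def by blast
  have pp: "(int q dvd int (da (pt x y v)) - int (da (pt x y v')) \<longleftrightarrow> \<not> int q dvd int (db (pt x y v)) - int (db (pt x y v'))) \<and>
    int (pk ^ (nk - 1)) dvd int (da (pt x y v)) - int (da (pt x y v')) \<and>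
    int (pk ^ (nk - 1)) dvd int (db (pt x y v)) - int (db (pt x y v'))"
    using pair_pt[OF v(1) v(3) vv, of x y] by simp
  show "int (pk ^ (nk - 1)) dvd int a - int a'" using pp v by simp
  show "\<not> int (pk ^ nk) dvd int a - int a'" using pp qb v unfolding q_def by simp
qed

theorem result:
  "(\<forall>z\<in>Lam M z0 (M div (pi * pj * pk)). splits M A B pk nk (tr M z (fib M pk))) \<or>
   (\<forall>z\<in>Lam M z0 (M div (pi * pj * pk)). splits M B A pk nk (tr M z (fib M pk)))"
proof (cases "ParA 0 0")
  case True
  have "splits M A B pk nk (tr M z (fib M pk))" if z: "z \<in> Lam M z0 (M div (pi * pj * pk))" for z
  proof -
    obtain x y m where c: "x < pi" "y < pj" "m < pk" "z = pt x y m" using coord z unfolding D_def by blast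
    have "ParA x y" using PA_const[OF c(1,2)] True by simp
    then show ?thesis using splitA c(4) by simp
  qed
  then show ?thesis by blast
next
  case False
  have "splits M B A pk nk (tr M z (fib M pk))" if z: "z \<in> Lam M z0 (M div (pi * pj * pk))" for z
  proof -
    obtain x y m where c: "x < pi" "y < pj" "m < pk" "z = pt x y m" using coord z unfolding D_def by blast
    have "\<not> ParA x y" using PA_const[OF c(1,2)] False by simp
    then have "ParB x y" using PA_or_PB by blast
    then show ?thesis using splitB c(4) by simp
  qed
  then show ?thesis by blast
qed

end

theorem lemma7p6:
  fixes pi pj pk ni nj nk M z0 :: nat
    and A B :: "nat set"
    and kappa :: "nat \<Rightarrow> nat"
    and lam :: "nat \<Rightarrow> nat"
  assumes primes: "prime pi" "prime pj" "prime pk"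
    and distinct: "pi \<noteq> pj" "pj \<noteq> pk" "pi \<noteq> pk"
    and exps: "ni \<ge> 1" "nj \<ge> 1" "nk \<ge> 1"
    and M_def: "M = pi ^ ni * pj ^ nj * pk ^ nk"
    and tile: "tiling M A B"
    and cyc: "cyclotomic M dvd mask_poly A"
    and fibered_grids: "\<forall>a\<in>A. \<exists>p\<in>{pi, pj, pk}.
          fibered M (A \<inter> Lam M a (M div (pi * pj * pk))) p"
    and kappa_dir: "\<forall>a\<in>A. kappa a \<in> {pi, pj, pk} \<and>
          fibered M (A \<inter> Lam M a (M div (pi * pj * pk))) (kappa a)"
    and kappa_grid: "\<forall>a\<in>A. \<forall>a'\<in>A \<inter> Lam M a (M div (pi * pj * pk)). kappa a' = kappa a"
    and z0: "z0 < M"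
    and kappa_ij: "\<forall>a\<in>Sig M A B (Lam M z0 (M div (pi * pj * pk))). kappa a \<in> {pi, pj}"
    and lam_ij: "\<forall>\<nu><pk. lam \<nu> \<in> {pi, pj}"
    and lam_kappa: "\<forall>\<nu><pk. \<forall>a\<in>Sig M A B
          (sumset M (tr M ((z0 + \<nu> * (M div pk)) mod M) (fib M pi)) (fib M pj)).
          kappa a = lam \<nu>"
    and count: "\<forall>l\<in>{pi, pj}. card {\<nu>. \<nu> < pk \<and> lam \<nu> = l} \<ge> 2"
  shows "(\<forall>z\<in>Lam M z0 (M div (pi * pj * pk)). splits M A B pk nk (tr M z (fib M pk))) \<or>
         (\<forall>z\<in>Lam M z0 (M div (pi * pj * pk)). splits M B A pk nk (tr M z (fib M pk)))"
proof -
  have "L pi pj pk ni nj nk M z0 A B kappa lam"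
    unfolding L_def using primes distinct exps M_def tile kappa_dir z0 lam_kappa count by blast
  then show ?thesis by (rule L.result)
qed

end
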